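(* For each $t$, \[ \mathbb{E}\Big[\sum_{n<t}\bar L_n(x_{n+1},y_{n+1})-\min_{x\in\mathcal{X}}\max_{y\in\mathcal{Y}}\sum_{n<t}\bar L_n(x,y)\Big]\ge -G\sum_{n<t}\mathbb{E}\|x_n-x_{n+1}\|_1-G\sum_{n<t}\mathbb{E}\|y'_n-y_{n+1}\|_1-2T^{2/3}(\log d+1)x_{\max}, \] and \[ \mathbb{E}\Big[\sum_{n<t}\bar L_n(x_{n+1},y_{n+1})-\min_{x\in\mathcal{X}}\max_{y\in\mathcal{Y}}\sum_{n<t}\bar L_n(x,y)\Big]\le G\sum_{n<t}\mathbb{E}\|y''_n-y_{n+1}\|_1+2T^{2/3}(\log d+1)x_{\max}. \]
   Context: Let $\mathcal{X}\subseteq\mathbb{R}^d$ be compact, $x_{\max}:=\max_{x\in\mathcal{X}}\|x\|_1$. For $t=1,\dots,T$, $f_t,c_{it}:\mathcal{X}\to\mathbb{R}$ ($i=1,\dots,I$) are $G_0$-Lipschitz w.r.t. $\ell_1$, $b_i\ge0$, and for $y=(\gamma_1,\dots,\gamma_I)$, $L_t(x,y)=f_t(x)+\sum_i\gamma_i[c_{it}(x)-b_i]$. Fix $\lambda>0$, $y_{\max}>0$, $\mathcal{Y}=[0,y_{\max}]^I$, and $\bar L_n(x,y)=L_n(x,y)+\frac{\lambda}{n^{1/9}}\sum_i\log(\gamma_i+1)$. $G>0$ is a constant such that for all $n$, $\bar L_n$ is $G$-Lipschitz in $x$ (for fixed $y\in\mathcal{Y}$) and in $y$ (for fixed $x\in\mathcal{X}$)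 with respect to $\ell_1$-norms. A global minimax point of $h$ on $\mathcal{X}\times\mathcal{Y}$ is $(x^*,y^* )$ with $h(x^*,y)\le h(x^*,y^* )\le\max_{y'\in\mathcal{Y}}h(x,y')$ for all $x,y$. Algorithm (FTDPL with $M=1$): $\eta=T^{-2/3}$; at each period $t$, draw $\theta_t\in\mathbb{R}^d$ with i.i.d. coordinates exponentially distributed with parameter $\eta$, independent across $t$, and let $(x_t,y_t)$ be a global minimax point of $(x,y)\mapsto\sum_{n<t}\bar L_n(x,y)-\theta_t^\top x$ on $\mathcal{X}\times\mathcal{Y}$. Define $y'_t=\arg\max_{y\in\mathcal{Y}}\{\sum_{n<t+1}\bar L_n(x_t,y)-\theta_{t+1}^\top x_t\}$ and $y''_t=\arg\max_{y\in\mathcal{Y}}\{\sum_{n<t}\bar L_n(x_{t+1},y)-\theta_t^\top x_{t+1}\}$. Expectations are over the $\theta$'s. *)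

theory Defs
  imports "HOL-Analysis.Analysis" "HOL-Probability.Probability"
begin

definition l1norm :: "real ^ 'n::finite \<Rightarrow> real" where
  "l1norm v = (\<Sum>i\<in>UNIV. \<bar>v $ i\<bar>)"

definition Ybox :: "real \<Rightarrow> (real ^ 'i::finite) set" where
  "Ybox ymax = {y. \<forall>i. 0 \<le> y $ i \<and> y $ i \<le> ymax}"

definition Lag :: "(nat \<Rightarrow> real^'d::finite \<Rightarrow> real) \<Rightarrow> (nat \<Rightarrow> 'i::finite \<Rightarrow> real^'d \<Rightarrow> real)
    \<Rightarrow> ('i \<Rightarrow> real) \<Rightarrow> nat \<Rightarrow> real^'d \<Rightarrow> real^'i \<Rightarrow> real" where
  "Lag f c b n x y = f n x + (\<Sum>i\<in>UNIV. y $ i * (c n i x - b i))"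

definition Lbar :: "(nat \<Rightarrow> real^'d::finite \<Rightarrow> real) \<Rightarrow> (nat \<Rightarrow> 'i::finite \<Rightarrow> real^'d \<Rightarrow> real)
    \<Rightarrow> ('i \<Rightarrow> real) \<Rightarrow> real \<Rightarrow> nat \<Rightarrow> real^'d \<Rightarrow> real^'i \<Rightarrow> real" where
  "Lbar f c b lam n x y = Lag f c b n x y + lam / (real n powr (1/9)) * (\<Sum>i\<in>UNIV. ln (y $ i + 1))"

definition is_global_minimax :: "('a \<Rightarrow> 'b \<Rightarrow> real) \<Rightarrow> 'a set \<Rightarrow> 'b set \<Rightarrow> 'a \<Rightarrow> 'b \<Rightarrow> bool" where
  "is_global_minimax h X Y xs ys \<longleftrightarrow> xs \<in> X \<and> ys \<in> Y \<and>
     (\<forall>x\<in>X. \<forall>y\<in>Y. h xs y \<le> h xs ys \<and> h xs ys \<le> (SUP y'\<in>Y. h x y'))"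

definition is_argmax_on :: "('b \<Rightarrow> real) \<Rightarrow> 'b set \<Rightarrow> 'b \<Rightarrow> bool" where
  "is_argmax_on g Y z \<longleftrightarrow> z \<in> Y \<and> (\<forall>y\<in>Y. g y \<le> g z)"

end

theory Submission
  imports Defs
begin



lemma indep_vars_reindex:
  assumes P: "prob_space M" and h: "inj h"
    and ind: "prob_space.indep_vars M M' X (range h)"
  shows "prob_space.indep_vars M (\<lambda>i. M' (h i)) (\<lambda>i. X (h i)) UNIV"
proof -
  interpret prob_space M by (rule P)
  have rv: "\<forall>i\<in>range h. random_variable (M' i) (X i)"
    and ind2: "indep_sets (\<lambda>i. {X i -` A \<inter> space M |A. A \<in> sets (M' i)}) (range h)"
    using ind unfolding indep_vars_def2 by auto
  show ?thesis unfolding indep_vars_def2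
  proof (intro conjI)
    show "\<forall>i\<in>UNIV. random_variable (M' (h i)) (X (h i))" using rv by auto
    show "indep_sets (\<lambda>i. {X (h i) -` A \<inter> space M |A. A \<in> sets (M' (h i))}) UNIV"
      unfolding indep_sets_def
    proof (intro conjI allI impI ballI)
      fix i show "{X (h i) -` A \<inter> space M |A. A \<in> sets (M' (h i))} \<subseteq> events"
        using ind2 unfolding indep_sets_def by auto
    next
      fix J :: "'b set" and A assume J: "J \<subseteq> UNIV" "J \<noteq> {}" "finite J"
        and A: "A \<in> (\<Pi> j\<in>J. {X (h j) -` A \<inter> space M |A. A \<in> sets (M' (h j))})"
      define A' where "A' = (\<lambda>j. A (inv h j))"
      have A'J: "A' \<in> (\<Pi> j\<in>h ` J. {X j -` A \<inter> space M |A. A \<in> sets (M' j)})"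
      proof (rule Pi_I)
        fix j assume "j \<in> h ` J"
        then obtain i where i: "i \<in> J" "j = h i" by blast
        have "A i \<in> {X (h i) -` A \<inter> space M |A. A \<in> sets (M' (h i))}"
          by (rule Pi_mem[OF A i(1)])
        then show "A' j \<in> {X j -` A \<inter> space M |A. A \<in> sets (M' j)}"
          using i by (simp add: A'_def inv_f_f[OF h])
      qed
      have "prob (\<Inter>j\<in>h ` J. A' j) = (\<Prod>j\<in>h ` J. prob (A' j))"
        by (rule indep_setsD[OF ind2]) (use J A'J in \<open>auto simp del: Int_iff\<close>)
      moreover have "(\<Inter>j\<in>h ` J. A' j) = (\<Inter>j\<in>J. A j)" using h by (auto simp: A'_def inv_f_f)
      moreover have "(\<Prod>j\<in>h ` J. prob (A' j)) = (\<Prod>j\<in>J. prob (A j))"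
        using h by (subst prod.reindex) (auto simp: A'_def inv_f_f inj_on_def)
      ultimately show "prob (\<Inter>j\<in>J. A j) = (\<Prod>j\<in>J. prob (A j))" by simp
    qed
  qed
qed



lemma cont_comp_measurable:
  fixes \<phi> :: "'a::topological_space \<Rightarrow> real"
  assumes "continuous_on S \<phi>" "g \<in> borel_measurable M" "\<And>\<omega>. \<omega> \<in> space M \<Longrightarrow> g \<omega> \<in> S"
  shows "(\<lambda>\<omega>. \<phi> (g \<omega>)) \<in> borel_measurable M"
  by (rule measurable_compose[where N="restrict_space borel S"])
     (use assms in \<open>auto intro!: borel_measurable_continuous_on_restrict measurable_restrict_space2\<close>)

lemma cont_comp_integrable:
  fixes \<phi> :: "'a::metric_space \<Rightarrow> real"
  assumes fm: "finite_measure M" and S: "compact S" and c: "continuous_on S \<phi>"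
    and g: "g \<in> borel_measurable M" and gS: "\<And>\<omega>. \<omega> \<in> space M \<Longrightarrow> g \<omega> \<in> S"
  shows "integrable M (\<lambda>\<omega>. \<phi> (g \<omega>))"
proof -
  interpret finite_measure M by (rule fm)
  have "bounded (\<phi> ` S)" by (rule compact_imp_bounded[OF compact_continuous_image[OF c S]])
  then obtain B where B: "\<And>x. x \<in> S \<Longrightarrow> norm (\<phi> x) \<le> B" by (auto simp: bounded_iff)
  show ?thesis
    by (rule integrable_const_bound[where B=B]) (use B gS cont_comp_measurable[OF c g gS] in auto)
qed

lemma l1norm_nonneg: "0 \<le> l1norm v" unfolding l1norm_def by (simp add: sum_nonneg)

lemma l1norm_commute: "l1norm (a - b) = l1norm (b - a)"
  unfolding l1norm_def by (simp add: abs_minus_commute)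

lemma l1norm_le_norm: "l1norm (v::real^'n) \<le> real CARD('n) * norm v"
proof -
  have "l1norm v \<le> (\<Sum>i\<in>(UNIV::'n set). norm v)"
    unfolding l1norm_def by (intro sum_mono) (metis component_le_norm_cart real_norm_def)
  then show ?thesis by simp
qed

lemma comp_le_l1norm: "\<bar>(v::real^'n) $ i\<bar> \<le> l1norm v"
  unfolding l1norm_def by (rule member_le_sum) auto

lemma continuous_on_l1norm: "continuous_on S (l1norm :: real^'n \<Rightarrow> real)"
  unfolding l1norm_def[abs_def] by (intro continuous_intros)

lemma inner_le_l1norm:
  assumes "\<And>i. \<bar>(u::real^'n) $ i\<bar> \<le> q"
  shows "\<bar>inner u x\<bar> \<le> q * l1norm x"
proof -
  have "\<bar>inner u x\<bar> = \<bar>\<Sum>i\<in>UNIV. u $ i * x $ i\<bar>" by (simp add: inner_vec_def)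
  also have "\<dots> \<le> (\<Sum>i\<in>UNIV. \<bar>u $ i * x $ i\<bar>)" by (rule sum_abs)
  also have "\<dots> \<le> (\<Sum>i\<in>UNIV. q * \<bar>x $ i\<bar>)"
    by (intro sum_mono) (simp add: abs_mult assms mult_right_mono)
  also have "\<dots> = q * l1norm x" by (simp add: l1norm_def sum_distrib_left)
  finally show ?thesis .
qed

lemma Ybox_cbox: "Ybox ymax = cbox 0 (\<chi> i. ymax)"
  unfolding Ybox_def by (auto simp: mem_box_cart)

lemma compact_Ybox: "compact (Ybox ymax)"
  unfolding Ybox_cbox by (rule compact_cbox)

lemma zero_Ybox: "0 \<le> ymax \<Longrightarrow> 0 \<in> Ybox ymax"
  unfolding Ybox_def by auto

lemma vec_measurable:
  assumes "\<And>i. (\<lambda>\<omega>. F \<omega> $ i) \<in> borel_measurable M"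
  shows "(F :: 'a \<Rightarrow> real^'n) \<in> borel_measurable M"
  apply (rule borel_measurable_euclidean_space[THEN iffD2])
  apply (rule ballI)
  apply (unfold Basis_vec_def)
  apply (erule UN_E)+
  apply (simp add: inner_axis assms)
  done

lemma exp_tail:
  assumes P: "prob_space M" and D: "distributed M lborel Z (exponential_density l)"
    and l: "0 < l" and a: "0 \<le> a"
  shows "integrable M (\<lambda>\<omega>. max (\<bar>Z \<omega>\<bar> - a) 0)"
    and "(\<integral>\<omega>. max (\<bar>Z \<omega>\<bar> - a) 0 \<partial>M) = exp (- a * l) / l"
proof -
  interpret prob_space M by (rule P)
  have Zm: "Z \<in> borel_measurable M"
    using distributed_measurable[OF D] by simp
  have iZ: "integrable M Z"
    using erlang_ith_moment_integrable[OF l D, of 1] by simp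
  show "integrable M (\<lambda>\<omega>. max (\<bar>Z \<omega>\<bar> - a) 0)"
    by (rule Bochner_Integration.integrable_bound[OF iZ]) (use Zm a in auto)
  have dn: "\<And>x. 0 \<le> exponential_density l x" using exponential_density_nonneg[OF l] by simp
  have "(\<integral>\<omega>. max (\<bar>Z \<omega>\<bar> - a) 0 \<partial>M) = (\<integral>x. exponential_density l x * max (\<bar>x\<bar> - a) 0 \<partial>lborel)"
    by (rule distributed_integral[OF D, symmetric]) (auto simp: dn)
  also have "\<dots> = (\<integral>z. exponential_density l (a + 1 * z) * max (\<bar>a + 1 * z\<bar> - a) 0 \<partial>lborel)"
    using lborel_integral_real_affine[of 1 "\<lambda>x. exponential_density l x * max (\<bar>x\<bar> - a) 0" a] by simp
  also have "\<dots> = (\<integral>z. exp (- a * l) * (exponential_density l z * z) \<partial>lborel)"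
  proof (rule Bochner_Integration.integral_cong[OF refl])
    fix z :: real
    show "exponential_density l (a + 1 * z) * max (\<bar>a + 1 * z\<bar> - a) 0 = exp (- a * l) * (exponential_density l z * z)"
    proof (cases "z < 0")
      case True then show ?thesis using a by (auto simp: exponential_density_def max_def)
    next
      case False then show ?thesis using a
        by (auto simp: exponential_density_def max_def algebra_simps exp_add[symmetric])
    qed
  qed
  also have "\<dots> = exp (- a * l) * (\<integral>z. exponential_density l z * z \<partial>lborel)" by simp
  also have "(\<integral>z. exponential_density l z * z \<partial>lborel) = (\<integral>\<omega>. Z \<omega> \<partial>M)"
    by (rule distributed_integral[OF D]) (auto simp: dn)
  also have "(\<integral>\<omega>. Z \<omega> \<partial>M) = 1 / l" using exponential_distributed_expectation[OF l D] by simp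
  finally show "(\<integral>\<omega>. max (\<bar>Z \<omega>\<bar> - a) 0 \<partial>M) = exp (- a * l) / l" by simp
qed



lemma same_dist:
  fixes \<theta> :: "nat \<Rightarrow> 'w \<Rightarrow> real^'d" and g :: "real^'d \<Rightarrow> real"
  assumes P: "prob_space M"
    and D: "\<And>s i. distributed M lborel (\<lambda>\<omega>. \<theta> s \<omega> $ i) (exponential_density l)"
    and ind: "prob_space.indep_vars M (\<lambda>_. borel) (\<lambda>(s, i) \<omega>. \<theta> s \<omega> $ i) UNIV"
    and g: "g \<in> borel_measurable borel"
  shows "(\<integral>\<omega>. g (\<theta> s \<omega>) \<partial>M) = (\<integral>\<omega>. g (\<theta> s' \<omega>) \<partial>M)"
proof -
  interpret prob_space M by (rule P)
  define DD where "DD = PiM (UNIV::'d set) (\<lambda>_. density lborel (exponential_density l))"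
  have rv: "\<And>s i. random_variable borel (\<lambda>\<omega>. \<theta> s \<omega> $ i)"
    using D distributed_measurable by (metis measurable_lborel1)
  have vm: "(\<lambda>f. vec_lambda f :: real^'d) \<in> borel_measurable (PiM (UNIV::'d set) (\<lambda>_. borel))"
    by (rule vec_measurable) simp
  have gm: "(\<lambda>f. g (vec_lambda f)) \<in> borel_measurable (PiM (UNIV::'d set) (\<lambda>_. borel))"
    using measurable_compose[OF vm g] .
  have key: "(\<integral>\<omega>. g (\<theta> s \<omega>) \<partial>M) = (\<integral>f. g (vec_lambda f) \<partial>DD)" for s
  proof -
    have "prob_space.indep_vars M (\<lambda>i. (\<lambda>_. borel) ((\<lambda>i. (s, i)) i))
          (\<lambda>i. (\<lambda>(s, i) \<omega>. \<theta> s \<omega> $ i) ((\<lambda>i. (s, i)) i)) UNIV"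
      by (rule indep_vars_reindex[OF P]) (auto intro: inj_onI indep_vars_subset[OF ind])
    then have ind_s: "indep_vars (\<lambda>_. borel) (\<lambda>i \<omega>. \<theta> s \<omega> $ i) UNIV" by simp
    have eq: "distr M (PiM UNIV (\<lambda>_. borel)) (\<lambda>\<omega>. \<lambda>i\<in>UNIV. \<theta> s \<omega> $ i)
          = PiM UNIV (\<lambda>i. distr M borel (\<lambda>\<omega>. \<theta> s \<omega> $ i))"
      using indep_vars_iff_distr_eq_PiM[where I=UNIV and M'="\<lambda>_. borel" and X="\<lambda>i \<omega>. \<theta> s \<omega> $ i"] rv ind_s by simp
    have "\<And>i. distr M borel (\<lambda>\<omega>. \<theta> s \<omega> $ i) = density lborel (exponential_density l)"
    proof -
      fix i
      have "distr M borel (\<lambda>\<omega>. \<theta> s \<omega> $ i) = distr M lborel (\<lambda>\<omega>. \<theta> s \<omega> $ i)"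
        by (rule distr_cong) auto
      also have "\<dots> = density lborel (exponential_density l)"
        using D[of s i] unfolding distributed_def by simp
      finally show "distr M borel (\<lambda>\<omega>. \<theta> s \<omega> $ i) = density lborel (exponential_density l)" .
    qed
    then have eq2: "distr M (PiM UNIV (\<lambda>_. borel)) (\<lambda>\<omega>. \<lambda>i\<in>UNIV. \<theta> s \<omega> $ i) = DD"
      unfolding eq DD_def by simp
    have Tm: "(\<lambda>\<omega>. \<lambda>i\<in>UNIV. \<theta> s \<omega> $ i) \<in> measurable M (PiM UNIV (\<lambda>_. borel))"
      by (rule measurable_restrict) (use rv in auto)
    have "(\<integral>f. g (vec_lambda f) \<partial>DD) = (\<integral>\<omega>. g (vec_lambda (\<lambda>i\<in>UNIV. \<theta> s \<omega> $ i)) \<partial>M)"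
      unfolding eq2[symmetric] by (rule integral_distr[OF Tm gm])
    also have "\<dots> = (\<integral>\<omega>. g (\<theta> s \<omega>) \<partial>M)" by (simp add: restrict_UNIV vec_nth_inverse)
    finally show ?thesis by simp
  qed
  show ?thesis using key[of s] key[of s'] by simp
qed


lemma sep_lip_cont:
  fixes \<phi> :: "real^'a \<Rightarrow> real^'b \<Rightarrow> real"
  assumes lx: "\<And>x x' y. x \<in> A \<Longrightarrow> x' \<in> A \<Longrightarrow> y \<in> C \<Longrightarrow> \<bar>\<phi> x y - \<phi> x' y\<bar> \<le> G * l1norm (x - x')"
    and ly: "\<And>x y y'. x \<in> A \<Longrightarrow> y \<in> C \<Longrightarrow> y' \<in> C \<Longrightarrow> \<bar>\<phi> x y - \<phi> x y'\<bar> \<le> G * l1norm (y - y')"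
    and G: "0 \<le> G"
  shows "continuous_on (A \<times> C) (\<lambda>p. \<phi> (fst p) (snd p))"
proof (rule lipschitz_on_continuous_on)
  show "(G * (real CARD('a) + real CARD('b)))-lipschitz_on (A \<times> C) (\<lambda>p. \<phi> (fst p) (snd p))"
  proof (rule lipschitz_onI)
    fix p p' assume p: "p \<in> A \<times> C" and p': "p' \<in> A \<times> C"
    obtain x y where pe: "p = (x, y)" by (cases p)
    obtain x' y' where pe': "p' = (x', y')" by (cases p')
    have xy: "x \<in> A" "y \<in> C" "x' \<in> A" "y' \<in> C" using p p' pe pe' by auto
    have d1: "norm (x - x') \<le> dist p p'" using dist_fst_le[of p p'] by (simp add: pe pe' dist_norm)
    have d2: "norm (y - y') \<le> dist p p'" using dist_snd_le[of p p'] by (simp add: pe pe' dist_norm)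
    have "\<bar>\<phi> x y - \<phi> x' y'\<bar> \<le> \<bar>\<phi> x y - \<phi> x' y\<bar> + \<bar>\<phi> x' y - \<phi> x' y'\<bar>" by linarith
    also have "\<dots> \<le> G * l1norm (x - x') + G * l1norm (y - y')"
      using lx[of x x' y] ly[of x' y y'] xy by linarith
    also have "\<dots> \<le> G * (real CARD('a) * norm (x - x')) + G * (real CARD('b) * norm (y - y'))"
      using l1norm_le_norm[of "x - x'"] l1norm_le_norm[of "y - y'"] G
      by (intro add_mono mult_left_mono) auto
    also have "\<dots> \<le> G * (real CARD('a) * dist p p') + G * (real CARD('b) * dist p p')"
      using d1 d2 G by (intro add_mono mult_left_mono) auto
    also have "\<dots> = G * (real CARD('a) + real CARD('b)) * dist p p'" by (simp add: algebra_simps)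
    finally show "dist (\<phi> (fst p) (snd p)) (\<phi> (fst p') (snd p')) \<le> G * (real CARD('a) + real CARD('b)) * dist p p'"
      by (simp add: pe pe' dist_real_def)
  qed (use G in auto)
qed



theorem lemma3:
  fixes X :: "(real ^ 'd::finite) set"
    and f :: "nat \<Rightarrow> real^'d \<Rightarrow> real"
    and c :: "nat \<Rightarrow> 'i::finite \<Rightarrow> real^'d \<Rightarrow> real"
    and b :: "'i \<Rightarrow> real"
    and lam ymax G0 G :: real
    and T :: nat
    and M :: "'w measure"
    and \<theta> :: "nat \<Rightarrow> 'w \<Rightarrow> real^'d"
    and xs :: "nat \<Rightarrow> real^'d \<Rightarrow> real^'d"
    and ys :: "nat \<Rightarrow> real^'d \<Rightarrow> real^'i"
    and yp ypp :: "nat \<Rightarrow> 'w \<Rightarrow> real^'i"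
    and t :: nat
  assumes X: "compact X" "X \<noteq> {}"
    and lipf: "\<And>n x x'. x \<in> X \<Longrightarrow> x' \<in> X \<Longrightarrow> \<bar>f n x - f n x'\<bar> \<le> G0 * l1norm (x - x')"
    and lipc: "\<And>n i x x'. x \<in> X \<Longrightarrow> x' \<in> X \<Longrightarrow> \<bar>c n i x - c n i x'\<bar> \<le> G0 * l1norm (x - x')"
    and b: "\<And>i. b i \<ge> 0"
    and lam: "lam > 0" and ymax: "ymax > 0"
    and G: "G > 0"
    and Gx: "\<And>n x x' y. n \<ge> 1 \<Longrightarrow> x \<in> X \<Longrightarrow> x' \<in> X \<Longrightarrow> y \<in> Ybox ymax \<Longrightarrow>
               \<bar>Lbar f c b lam n x y - Lbar f c b lam n x' y\<bar> \<le> G * l1norm (x - x')"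
    and Gy: "\<And>n x y y'. n \<ge> 1 \<Longrightarrow> x \<in> X \<Longrightarrow> y \<in> Ybox ymax \<Longrightarrow> y' \<in> Ybox ymax \<Longrightarrow>
               \<bar>Lbar f c b lam n x y - Lbar f c b lam n x y'\<bar> \<le> G * l1norm (y - y')"
    and T: "T \<ge> 1"
    and P: "prob_space M"
    and \<theta>_exp: "\<And>s i. distributed M lborel (\<lambda>\<omega>. \<theta> s \<omega> $ i)
                     (exponential_density (real T powr (-2/3)))"
    and \<theta>_indep: "prob_space.indep_vars M (\<lambda>_. borel) (\<lambda>(s, i) \<omega>. \<theta> s \<omega> $ i) UNIV"
    and minimax: "\<And>s v. is_global_minimax
               (\<lambda>x y. (\<Sum>n\<in>{1..<s}. Lbar f c b lam n x y) - inner v x) X (Ybox ymax) (xs s v) (ys s v)"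
    and xs_meas: "\<And>s. xs s \<in> borel_measurable borel"
    and ys_meas: "\<And>s. ys s \<in> borel_measurable borel"
    and yp_def: "\<And>s \<omega>. is_argmax_on
               (\<lambda>y. (\<Sum>n\<in>{1..<s+1}. Lbar f c b lam n (xs s (\<theta> s \<omega>)) y) - inner (\<theta> (s+1) \<omega>) (xs s (\<theta> s \<omega>)))
               (Ybox ymax) (yp s \<omega>)"
    and ypp_def: "\<And>s \<omega>. is_argmax_on
               (\<lambda>y. (\<Sum>n\<in>{1..<s}. Lbar f c b lam n (xs (s+1) (\<theta> (s+1) \<omega>)) y) - inner (\<theta> s \<omega>) (xs (s+1) (\<theta> (s+1) \<omega>)))
               (Ybox ymax) (ypp s \<omega>)"
    and yp_meas: "\<And>s. yp s \<in> borel_measurable M"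
    and ypp_meas: "\<And>s. ypp s \<in> borel_measurable M"
  shows
   "(\<integral>\<omega>. (\<Sum>n\<in>{1..<t}. Lbar f c b lam n (xs (n+1) (\<theta> (n+1) \<omega>)) (ys (n+1) (\<theta> (n+1) \<omega>)))
          - (INF x\<in>X. SUP y\<in>Ybox ymax. \<Sum>n\<in>{1..<t}. Lbar f c b lam n x y) \<partial>M)
      \<ge> - G * (\<Sum>n\<in>{1..<t}. \<integral>\<omega>. l1norm (xs n (\<theta> n \<omega>) - xs (n+1) (\<theta> (n+1) \<omega>)) \<partial>M)
        - G * (\<Sum>n\<in>{1..<t}. \<integral>\<omega>. l1norm (yp n \<omega> - ys (n+1) (\<theta> (n+1) \<omega>)) \<partial>M)
        - 2 * real T powr (2/3) * (ln (real CARD('d)) + 1) * (SUP x\<in>X. l1norm x)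
    \<and> (\<integral>\<omega>. (\<Sum>n\<in>{1..<t}. Lbar f c b lam n (xs (n+1) (\<theta> (n+1) \<omega>)) (ys (n+1) (\<theta> (n+1) \<omega>)))
          - (INF x\<in>X. SUP y\<in>Ybox ymax. \<Sum>n\<in>{1..<t}. Lbar f c b lam n x y) \<partial>M)
      \<le> G * (\<Sum>n\<in>{1..<t}. \<integral>\<omega>. l1norm (ypp n \<omega> - ys (n+1) (\<theta> (n+1) \<omega>)) \<partial>M)
        + 2 * real T powr (2/3) * (ln (real CARD('d)) + 1) * (SUP x\<in>X. l1norm x)"
proof -
  interpret prob_space M by (rule P)
  define t1 where "t1 = max t 1"
  have t1: "1 \<le> t1" by (simp add: t1_def)
  have tt: "{1..<t} = {1..<t1}" by (auto simp: t1_def)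
  define Y where "Y = (Ybox ymax :: (real^'i) set)"
  define \<eta> where "\<eta> = real T powr (-2/3)"
  have \<eta>: "0 < \<eta>" using T by (simp add: \<eta>_def)
  define F where "F s x y = (\<Sum>n\<in>{1..<s}. Lbar f c b lam n x y)" for s x y
  define \<Phi> where "\<Phi> s u = F s (xs s u) (ys s u) - inner u (xs s u)" for s u
  define B where "B = (SUP x\<in>X. l1norm x)"
  define V where "V = (INF x\<in>X. SUP y\<in>Y. F t1 x y)"
  define dd where "dd = real CARD('d)"
  define a where "a = ln dd / \<eta>"
  define q where "q u = a + (\<Sum>i\<in>UNIV. max (\<bar>u $ i\<bar> - a) 0)" for u :: "real^'d"
  have Yc: "compact Y" "Y \<noteq> {}" "0 \<in> Y"
    using compact_Ybox zero_Ybox[of ymax] ymax by (auto simp: Y_def)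
  have XY: "compact (X \<times> Y)" using X(1) Yc(1) by (rule compact_Times)
  have contL: "continuous_on (X \<times> Y) (\<lambda>p. Lbar f c b lam n (fst p) (snd p))" if "n \<ge> 1" for n
    by (rule sep_lip_cont[where G=G]) (use Gx Gy G that in \<open>auto simp: Y_def\<close>)
  have contF: "continuous_on (X \<times> Y) (\<lambda>p. F s (fst p) (snd p))" for s
    unfolding F_def by (intro continuous_on_sum) (use contL in auto)
  have bddF: "\<exists>K. \<forall>x\<in>X. \<forall>y\<in>Y. \<bar>F s x y\<bar> \<le> K" for s
  proof -
    have "bounded ((\<lambda>p. F s (fst p) (snd p)) ` (X \<times> Y))"
      by (rule compact_imp_bounded[OF compact_continuous_image[OF contF XY]])
    then obtain K where "\<forall>z\<in>(\<lambda>p. F s (fst p) (snd p)) ` (X \<times> Y). norm z \<le> K"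
      unfolding bounded_iff by blast
    then show ?thesis by force
  qed
  have bddA: "bdd_above ((\<lambda>y. F s x y) ` Y)" if "x \<in> X" for s x
  proof -
    obtain K where "\<forall>x\<in>X. \<forall>y\<in>Y. \<bar>F s x y\<bar> \<le> K" using bddF by blast
    then show ?thesis using that by (intro bdd_aboveI2[where M=K]) force
  qed
  have mm: "xs s v \<in> X" "ys s v \<in> Y" for s v
    using minimax[of s v] unfolding is_global_minimax_def Y_def by auto
  have mm3: "F s (xs s v) y - inner v (xs s v) \<le> \<Phi> s v" if "y \<in> Y" for s v y
    using minimax[of s v] that unfolding is_global_minimax_def \<Phi>_def F_def Y_def by auto
  have mm4: "\<Phi> s v \<le> (SUP y\<in>Y. F s x y - inner v x)" if "x \<in> X" for s v x
    using minimax[of s v] that unfolding is_global_minimax_def \<Phi>_def F_def Y_def by auto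
  have Phiup: "\<Phi> s v \<le> (SUP y\<in>Y. F s x y) - inner v x" if "x \<in> X" for s v x
  proof -
    have "(SUP y\<in>Y. F s x y - inner v x) \<le> (SUP y\<in>Y. F s x y) - inner v x"
      by (rule cSUP_least) (use Yc cSUP_upper[OF _ bddA[OF that]] in auto)
    then show ?thesis using mm4[OF that, of s v] by linarith
  qed
  have supmax: "(SUP y\<in>Y. F s x y) = F s x y0" if "y0 \<in> Y" "\<And>y. y \<in> Y \<Longrightarrow> F s x y \<le> F s x y0" for s x y0
    by (rule cSup_eq_maximum) (use that in auto)
  have Phieq: "\<Phi> s v = (SUP y\<in>Y. F s (xs s v) y) - inner v (xs s v)" for s v
  proof -
    have "(SUP y\<in>Y. F s (xs s v) y) = F s (xs s v) (ys s v)"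
      by (rule supmax) (use mm(2)[of s v] mm3[of _ s v] in \<open>auto simp: \<Phi>_def\<close>)
    then show ?thesis by (simp add: \<Phi>_def)
  qed
  have Fsuc: "F (n+1) x y = F n x y + Lbar f c b lam n x y" if "n \<ge> 1" for n x y
    unfolding F_def using that by (simp add: sum.atLeastLessThan_Suc)
  have F1: "F 1 x y = 0" for x y by (simp add: F_def)
  have PU: "Lbar f c b lam n (xs (n+1) u) y2 \<le> \<Phi> (n+1) u - \<Phi> n u"
    if "n \<ge> 1" "y2 \<in> Y" "\<And>y. y \<in> Y \<Longrightarrow> F n (xs (n+1) u) y \<le> F n (xs (n+1) u) y2" for n u y2
  proof -
    have x1: "xs (n+1) u \<in> X" by (rule mm(1))
    have "\<Phi> n u \<le> F n (xs (n+1) u) y2 - inner u (xs (n+1) u)"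
      using Phiup[OF x1, of n u] supmax[of y2 n "xs (n+1) u"] that by simp
    moreover have "F (n+1) (xs (n+1) u) y2 - inner u (xs (n+1) u) \<le> \<Phi> (n+1) u"
      using mm3[of y2 "n+1" u] that by simp
    ultimately show ?thesis using Fsuc[OF that(1), of "xs (n+1) u" y2] by linarith
  qed
  have PL: "\<Phi> (n+1) u - \<Phi> n u \<le> Lbar f c b lam n (xs n u) y2"
    if "n \<ge> 1" "y2 \<in> Y" "\<And>y. y \<in> Y \<Longrightarrow> F (n+1) (xs n u) y \<le> F (n+1) (xs n u) y2" for n u y2
  proof -
    have x0: "xs n u \<in> X" by (rule mm(1))
    have "\<Phi> (n+1) u \<le> F (n+1) (xs n u) y2 - inner u (xs n u)"
      using Phiup[OF x0, of "n+1" u] supmax[of y2 "n+1" "xs n u"] that by simp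
    moreover have "F n (xs n u) y2 - inner u (xs n u) \<le> \<Phi> n u"
      using mm3[of y2 n u] that by simp
    ultimately show ?thesis using Fsuc[OF that(1), of "xs n u" y2] by linarith
  qed
  have bddl1: "bdd_above (l1norm ` X)"
    by (rule bounded_imp_bdd_above[OF compact_imp_bounded[OF compact_continuous_image[OF continuous_on_l1norm X(1)]]])
  have l1B: "l1norm x \<le> B" if "x \<in> X" for x
    unfolding B_def by (rule cSUP_upper[OF that bddl1])
  have B0: "0 \<le> B" using X(2) l1B l1norm_nonneg by (meson ex_in_conv order_trans)
  have dd1: "1 \<le> dd" by (simp add: dd_def)
  have a0: "0 \<le> a" unfolding a_def using dd1 \<eta> by simp
  have qge: "\<bar>u $ i\<bar> \<le> q u" for u i
  proof -
    have "max (\<bar>u $ i\<bar> - a) 0 \<le> (\<Sum>i\<in>UNIV. max (\<bar>u $ i\<bar> - a) 0)"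
      by (rule member_le_sum) auto
    then show ?thesis unfolding q_def by linarith
  qed
  have q0: "0 \<le> q u" for u using qge[of u] abs_ge_zero order_trans by blast
  have innerq: "\<bar>inner u x\<bar> \<le> q u * B" if "x \<in> X" for u x
    using inner_le_l1norm[of u "q u" x, OF qge] l1B[OF that] q0[of u]
    by (meson mult_left_mono order_trans)
  have Phi1: "\<Phi> 1 u = - inner u (xs 1 u)" for u unfolding \<Phi>_def F1 by simp
  have bddbelow: "bdd_below ((\<lambda>x. SUP y\<in>Y. F t1 x y) ` X)"
    by (rule bdd_belowI2[where m="\<Phi> t1 0"]) (use Phiup[of _ t1 0] in simp)
  have PhitU: "\<Phi> t1 u \<le> V + q u * B" for u
  proof -
    have "\<Phi> t1 u - q u * B \<le> V" unfolding V_def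
    proof (rule cINF_greatest[OF X(2)])
      fix x assume x: "x \<in> X"
      show "\<Phi> t1 u - q u * B \<le> (SUP y\<in>Y. F t1 x y)"
        using Phiup[OF x, of t1 u] innerq[OF x, of u] by linarith
    qed
    then show ?thesis by linarith
  qed
  have PhitL: "V - q u * B \<le> \<Phi> t1 u" for u
  proof -
    have "V \<le> (SUP y\<in>Y. F t1 (xs t1 u) y)" unfolding V_def by (rule cINF_lower[OF bddbelow mm(1)])
    then show ?thesis using Phieq[of t1 u] innerq[OF mm(1), of u "t1" u] by linarith
  qed
  have diffU: "\<Phi> t1 u - \<Phi> 1 u \<le> V + 2 * B * q u" for u
    using PhitU[of u] Phi1[of u] innerq[OF mm(1), of u 1 u] by (simp add: algebra_simps)
  have diffL: "V - 2 * B * q u \<le> \<Phi> t1 u - \<Phi> 1 u" for u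
    using PhitL[of u] Phi1[of u] innerq[OF mm(1), of u 1 u] by (simp add: algebra_simps)
  have fm: "finite_measure M" using P unfolding prob_space_def by simp
  have Dth: "distributed M lborel (\<lambda>\<omega>. \<theta> s \<omega> $ i) (exponential_density \<eta>)" for s i
    using \<theta>_exp[of s i] by (simp add: \<eta>_def)
  have thmeas: "\<theta> s \<in> borel_measurable M" for s
  proof (rule vec_measurable)
    fix i show "(\<lambda>\<omega>. \<theta> s \<omega> $ i) \<in> borel_measurable M"
      using distributed_measurable[OF Dth[of s i]] by simp
  qed
  have thi: "integrable M (\<lambda>\<omega>. \<theta> s \<omega> $ i)" for s i
    using erlang_ith_moment_integrable[OF \<eta> Dth[of s i], of 1] by simp
  have l1th: "integrable M (\<lambda>\<omega>. B * l1norm (\<theta> s \<omega>))" for s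
  proof -
    have "integrable M (\<lambda>\<omega>. \<Sum>i\<in>UNIV. \<bar>\<theta> s \<omega> $ i\<bar>)"
      using thi by auto
    then show ?thesis unfolding l1norm_def by simp
  qed
  have xsm: "(\<lambda>\<omega>. xs k (\<theta> s \<omega>)) \<in> borel_measurable M" for k s
    using measurable_compose[OF thmeas xs_meas] .
  have ysm: "(\<lambda>\<omega>. ys k (\<theta> s \<omega>)) \<in> borel_measurable M" for k s
    using measurable_compose[OF thmeas ys_meas] .
  have Fint: "integrable M (\<lambda>\<omega>. F k (xs k (\<theta> s \<omega>)) (ys k (\<theta> s \<omega>)))" for k s
    using cont_comp_integrable[OF fm XY contF[of k] borel_measurable_Pair[OF xsm[of k s] ysm[of k s]]] mm
    by simp
  have innint: "integrable M (\<lambda>\<omega>. inner (\<theta> s \<omega>) (xs k (\<theta> s \<omega>)))" for k s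
  proof (rule Bochner_Integration.integrable_bound[OF l1th[of s]])
    show "(\<lambda>\<omega>. inner (\<theta> s \<omega>) (xs k (\<theta> s \<omega>))) \<in> borel_measurable M"
      using borel_measurable_inner[OF thmeas xsm] .
    show "AE \<omega> in M. norm (inner (\<theta> s \<omega>) (xs k (\<theta> s \<omega>))) \<le> norm (B * l1norm (\<theta> s \<omega>))"
    proof (rule AE_I2)
      fix \<omega>
      have "\<bar>inner (\<theta> s \<omega>) (xs k (\<theta> s \<omega>))\<bar> \<le> l1norm (\<theta> s \<omega>) * l1norm (xs k (\<theta> s \<omega>))"
        by (rule inner_le_l1norm) (rule comp_le_l1norm)
      also have "\<dots> \<le> l1norm (\<theta> s \<omega>) * B"
        by (rule mult_left_mono[OF l1B[OF mm(1)] l1norm_nonneg])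
      also have "\<dots> \<le> \<bar>B * l1norm (\<theta> s \<omega>)\<bar>" by (simp add: mult.commute)
      finally show "norm (inner (\<theta> s \<omega>) (xs k (\<theta> s \<omega>))) \<le> norm (B * l1norm (\<theta> s \<omega>))" by simp
    qed
  qed
  have Phiint: "integrable M (\<lambda>\<omega>. \<Phi> k (\<theta> s \<omega>))" for k s
    unfolding \<Phi>_def by (rule Bochner_Integration.integrable_diff[OF Fint innint])
  have Phim: "\<Phi> k \<in> borel_measurable borel" for k
  proof -
    have "(\<lambda>u. F k (xs k u) (ys k u)) \<in> borel_measurable borel"
      using cont_comp_measurable[OF contF[of k] borel_measurable_Pair[OF xs_meas[of k] ys_meas[of k]]] mm
      by simp
    moreover have "(\<lambda>u. inner u (xs k u)) \<in> borel_measurable borel"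
      using borel_measurable_inner[OF measurable_ident_sets[OF refl] xs_meas[of k]] .
    ultimately show ?thesis unfolding \<Phi>_def[abs_def] by (rule borel_measurable_diff)
  qed
  define e where "e k = (\<integral>\<omega>. \<Phi> k (\<theta> 1 \<omega>) \<partial>M)" for k
  have same: "(\<integral>\<omega>. \<Phi> k (\<theta> s \<omega>) \<partial>M) = e k" for k s
    unfolding e_def by (rule same_dist[OF P \<theta>_exp \<theta>_indep Phim])
  have tail: "integrable M (\<lambda>\<omega>. max (\<bar>\<theta> s \<omega> $ i\<bar> - a) 0)"
      "(\<integral>\<omega>. max (\<bar>\<theta> s \<omega> $ i\<bar> - a) 0 \<partial>M) = exp (- a * \<eta>) / \<eta>" for s i
    using exp_tail[OF P Dth[of s i] \<eta> a0] by auto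
  have qint: "integrable M (\<lambda>\<omega>. q (\<theta> s \<omega>))" for s
    unfolding q_def using tail(1) by auto
  have qE: "(\<integral>\<omega>. q (\<theta> s \<omega>) \<partial>M) = (ln dd + 1) / \<eta>" for s
  proof -
    have "(\<integral>\<omega>. q (\<theta> s \<omega>) \<partial>M) = a + (\<Sum>i\<in>UNIV. (\<integral>\<omega>. max (\<bar>\<theta> s \<omega> $ i\<bar> - a) 0 \<partial>M))"
      unfolding q_def using tail(1) by (simp add: Bochner_Integration.integral_add Bochner_Integration.integral_sum prob_space)
    also have "\<dots> = a + dd * (exp (- a * \<eta>) / \<eta>)" by (simp add: tail(2) dd_def)
    also have "exp (- a * \<eta>) = 1 / dd" unfolding a_def using \<eta> dd1 by (simp add: exp_minus exp_ln inverse_eq_divide)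
    finally show ?thesis using dd1 \<eta> by (simp add: a_def field_simps)
  qed
  have Lint: "integrable M (\<lambda>\<omega>. Lbar f c b lam n (xs k (\<theta> s \<omega>)) (ys k (\<theta> s \<omega>)))" if "n \<ge> 1" for n k s
    using cont_comp_integrable[OF fm XY contL[OF that] borel_measurable_Pair[OF xsm[of k s] ysm[of k s]]] mm
    by simp
  have contd: "continuous_on S (\<lambda>p. l1norm (fst p - snd p))" for S :: "((real^'n) \<times> (real^'n)) set"
    unfolding l1norm_def by (intro continuous_intros)
  have XX: "compact (X \<times> X)" by (rule compact_Times[OF X(1) X(1)])
  have YY: "compact (Y \<times> Y)" by (rule compact_Times[OF Yc(1) Yc(1)])
  have dxint: "integrable M (\<lambda>\<omega>. l1norm (xs n (\<theta> n \<omega>) - xs (n+1) (\<theta> (n+1) \<omega>)))" for n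
    using cont_comp_integrable[OF fm XX contd borel_measurable_Pair[OF xsm[of n n] xsm[of "n+1" "n+1"]]] mm
    by simp
  have ypY: "yp n \<omega> \<in> Y" "\<And>y. y \<in> Y \<Longrightarrow> F (n+1) (xs n (\<theta> n \<omega>)) y \<le> F (n+1) (xs n (\<theta> n \<omega>)) (yp n \<omega>)" for n \<omega>
    using yp_def[of n \<omega>] unfolding is_argmax_on_def F_def Y_def by auto
  have yppY: "ypp n \<omega> \<in> Y" "\<And>y. y \<in> Y \<Longrightarrow> F n (xs (n+1) (\<theta> (n+1) \<omega>)) y \<le> F n (xs (n+1) (\<theta> (n+1) \<omega>)) (ypp n \<omega>)" for n \<omega>
    using ypp_def[of n \<omega>] unfolding is_argmax_on_def F_def Y_def by auto
  have dyint: "integrable M (\<lambda>\<omega>. l1norm (yp n \<omega> - ys (n+1) (\<theta> (n+1) \<omega>)))" for n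
    using cont_comp_integrable[OF fm YY contd borel_measurable_Pair[OF yp_meas[of n] ysm[of "n+1" "n+1"]]] mm ypY
    by simp
  have dyyint: "integrable M (\<lambda>\<omega>. l1norm (ypp n \<omega> - ys (n+1) (\<theta> (n+1) \<omega>)))" for n
    using cont_comp_integrable[OF fm YY contd borel_measurable_Pair[OF ypp_meas[of n] ysm[of "n+1" "n+1"]]] mm yppY
    by simp
  have UPn: "(\<integral>\<omega>. Lbar f c b lam n (xs (n+1) (\<theta> (n+1) \<omega>)) (ys (n+1) (\<theta> (n+1) \<omega>)) \<partial>M)
      \<le> e (n+1) - e n + G * (\<integral>\<omega>. l1norm (ypp n \<omega> - ys (n+1) (\<theta> (n+1) \<omega>)) \<partial>M)" if n1: "n \<ge> 1" for n
  proof -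
    have "(\<integral>\<omega>. Lbar f c b lam n (xs (n+1) (\<theta> (n+1) \<omega>)) (ys (n+1) (\<theta> (n+1) \<omega>)) \<partial>M)
      \<le> (\<integral>\<omega>. \<Phi> (n+1) (\<theta> (n+1) \<omega>) - \<Phi> n (\<theta> (n+1) \<omega>) + G * l1norm (ypp n \<omega> - ys (n+1) (\<theta> (n+1) \<omega>)) \<partial>M)"
    proof (rule integral_mono)
      show "integrable M (\<lambda>\<omega>. Lbar f c b lam n (xs (n+1) (\<theta> (n+1) \<omega>)) (ys (n+1) (\<theta> (n+1) \<omega>)))"
        by (rule Lint[OF n1])
      show "integrable M (\<lambda>\<omega>. \<Phi> (n+1) (\<theta> (n+1) \<omega>) - \<Phi> n (\<theta> (n+1) \<omega>) + G * l1norm (ypp n \<omega> - ys (n+1) (\<theta> (n+1) \<omega>)))"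
        by (intro Bochner_Integration.integrable_add Bochner_Integration.integrable_diff integrable_mult_right Phiint dyyint)
    next
      fix \<omega> assume "\<omega> \<in> space M"
      have p1: "Lbar f c b lam n (xs (n+1) (\<theta> (n+1) \<omega>)) (ypp n \<omega>) \<le> \<Phi> (n+1) (\<theta> (n+1) \<omega>) - \<Phi> n (\<theta> (n+1) \<omega>)"
        by (rule PU[OF n1 yppY(1) yppY(2)])
      have p2: "\<bar>Lbar f c b lam n (xs (n+1) (\<theta> (n+1) \<omega>)) (ys (n+1) (\<theta> (n+1) \<omega>)) - Lbar f c b lam n (xs (n+1) (\<theta> (n+1) \<omega>)) (ypp n \<omega>)\<bar>
          \<le> G * l1norm (ys (n+1) (\<theta> (n+1) \<omega>) - ypp n \<omega>)"
        by (rule Gy[OF n1 mm(1) mm(2)[unfolded Y_def] yppY(1)[unfolded Y_def]])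
      show "Lbar f c b lam n (xs (n+1) (\<theta> (n+1) \<omega>)) (ys (n+1) (\<theta> (n+1) \<omega>))
          \<le> \<Phi> (n+1) (\<theta> (n+1) \<omega>) - \<Phi> n (\<theta> (n+1) \<omega>) + G * l1norm (ypp n \<omega> - ys (n+1) (\<theta> (n+1) \<omega>))"
        using p1 p2[unfolded l1norm_commute[of "ys (n+1) (\<theta> (n+1) \<omega>)" "ypp n \<omega>"]] by linarith
    qed
    also have "\<dots> = (\<integral>\<omega>. \<Phi> (n+1) (\<theta> (n+1) \<omega>) \<partial>M) - (\<integral>\<omega>. \<Phi> n (\<theta> (n+1) \<omega>) \<partial>M)
        + G * (\<integral>\<omega>. l1norm (ypp n \<omega> - ys (n+1) (\<theta> (n+1) \<omega>)) \<partial>M)"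
      using Phiint dyyint by (simp add: Bochner_Integration.integral_add Bochner_Integration.integral_diff)
    also have "\<dots> = e (n+1) - e n + G * (\<integral>\<omega>. l1norm (ypp n \<omega> - ys (n+1) (\<theta> (n+1) \<omega>)) \<partial>M)"
      by (simp only: same)
    finally show ?thesis .
  qed
  have LOn: "e (n+1) - e n - G * (\<integral>\<omega>. l1norm (xs n (\<theta> n \<omega>) - xs (n+1) (\<theta> (n+1) \<omega>)) \<partial>M)
      - G * (\<integral>\<omega>. l1norm (yp n \<omega> - ys (n+1) (\<theta> (n+1) \<omega>)) \<partial>M)
      \<le> (\<integral>\<omega>. Lbar f c b lam n (xs (n+1) (\<theta> (n+1) \<omega>)) (ys (n+1) (\<theta> (n+1) \<omega>)) \<partial>M)" if n1: "n \<ge> 1" for n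
  proof -
    have "e (n+1) - e n - G * (\<integral>\<omega>. l1norm (xs n (\<theta> n \<omega>) - xs (n+1) (\<theta> (n+1) \<omega>)) \<partial>M)
      - G * (\<integral>\<omega>. l1norm (yp n \<omega> - ys (n+1) (\<theta> (n+1) \<omega>)) \<partial>M)
      = (\<integral>\<omega>. \<Phi> (n+1) (\<theta> n \<omega>) \<partial>M) - (\<integral>\<omega>. \<Phi> n (\<theta> n \<omega>) \<partial>M)
        - G * (\<integral>\<omega>. l1norm (xs n (\<theta> n \<omega>) - xs (n+1) (\<theta> (n+1) \<omega>)) \<partial>M)
      - G * (\<integral>\<omega>. l1norm (yp n \<omega> - ys (n+1) (\<theta> (n+1) \<omega>)) \<partial>M)"
      by (simp only: same)
    also have "\<dots> = (\<integral>\<omega>. \<Phi> (n+1) (\<theta> n \<omega>) - \<Phi> n (\<theta> n \<omega>)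
        - G * l1norm (xs n (\<theta> n \<omega>) - xs (n+1) (\<theta> (n+1) \<omega>))
        - G * l1norm (yp n \<omega> - ys (n+1) (\<theta> (n+1) \<omega>)) \<partial>M)"
      using Phiint dxint dyint by (simp add: Bochner_Integration.integral_add Bochner_Integration.integral_diff)
    also have "\<dots> \<le> (\<integral>\<omega>. Lbar f c b lam n (xs (n+1) (\<theta> (n+1) \<omega>)) (ys (n+1) (\<theta> (n+1) \<omega>)) \<partial>M)"
    proof (rule integral_mono)
      show "integrable M (\<lambda>\<omega>. Lbar f c b lam n (xs (n+1) (\<theta> (n+1) \<omega>)) (ys (n+1) (\<theta> (n+1) \<omega>)))"
        by (rule Lint[OF n1])
      show "integrable M (\<lambda>\<omega>. \<Phi> (n+1) (\<theta> n \<omega>) - \<Phi> n (\<theta> n \<omega>)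
        - G * l1norm (xs n (\<theta> n \<omega>) - xs (n+1) (\<theta> (n+1) \<omega>))
        - G * l1norm (yp n \<omega> - ys (n+1) (\<theta> (n+1) \<omega>)))"
        by (intro Bochner_Integration.integrable_diff integrable_mult_right Phiint dxint dyint)
    next
      fix \<omega> assume "\<omega> \<in> space M"
      have p1: "\<Phi> (n+1) (\<theta> n \<omega>) - \<Phi> n (\<theta> n \<omega>) \<le> Lbar f c b lam n (xs n (\<theta> n \<omega>)) (yp n \<omega>)"
        by (rule PL[OF n1 ypY(1) ypY(2)])
      have p2: "\<bar>Lbar f c b lam n (xs (n+1) (\<theta> (n+1) \<omega>)) (ys (n+1) (\<theta> (n+1) \<omega>)) - Lbar f c b lam n (xs n (\<theta> n \<omega>)) (ys (n+1) (\<theta> (n+1) \<omega>))\<bar>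
          \<le> G * l1norm (xs (n+1) (\<theta> (n+1) \<omega>) - xs n (\<theta> n \<omega>))"
        by (rule Gx[OF n1 mm(1) mm(1) mm(2)[unfolded Y_def]])
      have p3: "\<bar>Lbar f c b lam n (xs n (\<theta> n \<omega>)) (ys (n+1) (\<theta> (n+1) \<omega>)) - Lbar f c b lam n (xs n (\<theta> n \<omega>)) (yp n \<omega>)\<bar>
          \<le> G * l1norm (ys (n+1) (\<theta> (n+1) \<omega>) - yp n \<omega>)"
        by (rule Gy[OF n1 mm(1) mm(2)[unfolded Y_def] ypY(1)[unfolded Y_def]])
      show "\<Phi> (n+1) (\<theta> n \<omega>) - \<Phi> n (\<theta> n \<omega>)
        - G * l1norm (xs n (\<theta> n \<omega>) - xs (n+1) (\<theta> (n+1) \<omega>))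
        - G * l1norm (yp n \<omega> - ys (n+1) (\<theta> (n+1) \<omega>))
        \<le> Lbar f c b lam n (xs (n+1) (\<theta> (n+1) \<omega>)) (ys (n+1) (\<theta> (n+1) \<omega>))"
        using p1 p3[unfolded l1norm_commute[of "ys (n+1) (\<theta> (n+1) \<omega>)" "yp n \<omega>"]]
          p2[unfolded l1norm_commute[of "xs (n+1) (\<theta> (n+1) \<omega>)" "xs n (\<theta> n \<omega>)"]] by linarith
    qed
    finally show ?thesis .
  qed
  have tele: "(\<Sum>n\<in>{1..<t1}. e (n+1) - e n) = e t1 - e 1"
    using sum_Suc_diff'[OF t1, of e] by simp
  have eU: "e t1 - e 1 \<le> V + 2 * B * ((ln dd + 1) / \<eta>)"
  proof -
    have "e t1 - e 1 = (\<integral>\<omega>. \<Phi> t1 (\<theta> 1 \<omega>) - \<Phi> 1 (\<theta> 1 \<omega>) \<partial>M)"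
      unfolding e_def using Phiint by (simp add: Bochner_Integration.integral_diff)
    also have "\<dots> \<le> (\<integral>\<omega>. V + 2 * B * q (\<theta> 1 \<omega>) \<partial>M)"
      by (rule integral_mono) (use Phiint qint diffU in auto)
    also have "\<dots> = V + 2 * B * ((ln dd + 1) / \<eta>)"
      using qint qE by (simp add: Bochner_Integration.integral_add prob_space)
    finally show ?thesis .
  qed
  have eL: "V - 2 * B * ((ln dd + 1) / \<eta>) \<le> e t1 - e 1"
  proof -
    have "V - 2 * B * ((ln dd + 1) / \<eta>) = (\<integral>\<omega>. V - 2 * B * q (\<theta> 1 \<omega>) \<partial>M)"
      using qint qE by (simp add: Bochner_Integration.integral_diff prob_space)
    also have "\<dots> \<le> (\<integral>\<omega>. \<Phi> t1 (\<theta> 1 \<omega>) - \<Phi> 1 (\<theta> 1 \<omega>) \<partial>M)"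
      by (rule integral_mono) (use Phiint qint diffL in auto)
    also have "\<dots> = e t1 - e 1"
      unfolding e_def using Phiint by (simp add: Bochner_Integration.integral_diff)
    finally show ?thesis .
  qed
  have hC: "2 * B * ((ln dd + 1) / \<eta>) = 2 * real T powr (2/3) * (ln dd + 1) * B"
  proof -
    have h: "1 / \<eta> = real T powr (2/3)" unfolding \<eta>_def by (simp add: powr_minus_divide)
    have "2 * B * ((ln dd + 1) / \<eta>) = 2 * (1 / \<eta>) * (ln dd + 1) * B" by (simp add: field_simps)
    then show ?thesis unfolding h .
  qed
  have isum: "integrable M (\<lambda>\<omega>. \<Sum>n\<in>{1..<t1}. Lbar f c b lam n (xs (n+1) (\<theta> (n+1) \<omega>)) (ys (n+1) (\<theta> (n+1) \<omega>)))"
    by (rule Bochner_Integration.integrable_sum) (rule Lint, simp)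
  have LHS: "(\<integral>\<omega>. (\<Sum>n\<in>{1..<t1}. Lbar f c b lam n (xs (n+1) (\<theta> (n+1) \<omega>)) (ys (n+1) (\<theta> (n+1) \<omega>))) - V \<partial>M)
     = (\<Sum>n\<in>{1..<t1}. (\<integral>\<omega>. Lbar f c b lam n (xs (n+1) (\<theta> (n+1) \<omega>)) (ys (n+1) (\<theta> (n+1) \<omega>)) \<partial>M)) - V"
  proof -
    have "(\<integral>\<omega>. (\<Sum>n\<in>{1..<t1}. Lbar f c b lam n (xs (n+1) (\<theta> (n+1) \<omega>)) (ys (n+1) (\<theta> (n+1) \<omega>))) - V \<partial>M)
      = (\<integral>\<omega>. (\<Sum>n\<in>{1..<t1}. Lbar f c b lam n (xs (n+1) (\<theta> (n+1) \<omega>)) (ys (n+1) (\<theta> (n+1) \<omega>))) \<partial>M) - V"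
      using isum by (simp add: Bochner_Integration.integral_diff prob_space)
    also have "(\<integral>\<omega>. (\<Sum>n\<in>{1..<t1}. Lbar f c b lam n (xs (n+1) (\<theta> (n+1) \<omega>)) (ys (n+1) (\<theta> (n+1) \<omega>))) \<partial>M)
       = (\<Sum>n\<in>{1..<t1}. (\<integral>\<omega>. Lbar f c b lam n (xs (n+1) (\<theta> (n+1) \<omega>)) (ys (n+1) (\<theta> (n+1) \<omega>)) \<partial>M))"
      by (rule Bochner_Integration.integral_sum) (rule Lint, simp)
    finally show ?thesis .
  qed
  have SU: "(\<Sum>n\<in>{1..<t1}. (\<integral>\<omega>. Lbar f c b lam n (xs (n+1) (\<theta> (n+1) \<omega>)) (ys (n+1) (\<theta> (n+1) \<omega>)) \<partial>M))
     \<le> (\<Sum>n\<in>{1..<t1}. e (n+1) - e n) + G * (\<Sum>n\<in>{1..<t1}. \<integral>\<omega>. l1norm (ypp n \<omega> - ys (n+1) (\<theta> (n+1) \<omega>)) \<partial>M)"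
  proof -
    have "(\<Sum>n\<in>{1..<t1}. (\<integral>\<omega>. Lbar f c b lam n (xs (n+1) (\<theta> (n+1) \<omega>)) (ys (n+1) (\<theta> (n+1) \<omega>)) \<partial>M))
      \<le> (\<Sum>n\<in>{1..<t1}. e (n+1) - e n + G * (\<integral>\<omega>. l1norm (ypp n \<omega> - ys (n+1) (\<theta> (n+1) \<omega>)) \<partial>M))"
      by (rule sum_mono) (rule UPn, simp)
    then show ?thesis by (simp add: sum.distrib sum_distrib_left)
  qed
  have SL: "(\<Sum>n\<in>{1..<t1}. e (n+1) - e n) - G * (\<Sum>n\<in>{1..<t1}. \<integral>\<omega>. l1norm (xs n (\<theta> n \<omega>) - xs (n+1) (\<theta> (n+1) \<omega>)) \<partial>M)
      - G * (\<Sum>n\<in>{1..<t1}. \<integral>\<omega>. l1norm (yp n \<omega> - ys (n+1) (\<theta> (n+1) \<omega>)) \<partial>M)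
      \<le> (\<Sum>n\<in>{1..<t1}. (\<integral>\<omega>. Lbar f c b lam n (xs (n+1) (\<theta> (n+1) \<omega>)) (ys (n+1) (\<theta> (n+1) \<omega>)) \<partial>M))"
  proof -
    have "(\<Sum>n\<in>{1..<t1}. e (n+1) - e n - G * (\<integral>\<omega>. l1norm (xs n (\<theta> n \<omega>) - xs (n+1) (\<theta> (n+1) \<omega>)) \<partial>M)
      - G * (\<integral>\<omega>. l1norm (yp n \<omega> - ys (n+1) (\<theta> (n+1) \<omega>)) \<partial>M))
      \<le> (\<Sum>n\<in>{1..<t1}. (\<integral>\<omega>. Lbar f c b lam n (xs (n+1) (\<theta> (n+1) \<omega>)) (ys (n+1) (\<theta> (n+1) \<omega>)) \<partial>M))"
      by (rule sum_mono) (rule LOn, simp)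
    then show ?thesis by (simp add: sum_subtractf sum_distrib_left)
  qed
  have Veq: "(INF x\<in>X. SUP y\<in>Ybox ymax. \<Sum>n\<in>{1..<t1}. Lbar f c b lam n x y) = V"
    by (simp add: V_def F_def Y_def)
  have Beq: "(SUP x\<in>X. l1norm x) = B" by (simp add: B_def)
  have ddeq: "real CARD('d) = dd" by (simp add: dd_def)
  show ?thesis
    unfolding tt Veq Beq ddeq LHS
    using SU SL tele eU eL hC by linarith
qed

end
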